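(* Let $S_0,S_1,S_2$ be pair-partitions of $[2k]$, and let $\mathbf{p}=(p_1,\dots,p_m)$, $\mathbf{q}=(q_1,\dots,q_m)$ be sequences of positive integers with $q_1\ge\cdots\ge q_m$. Then $$N^{(1)}_{S_0,S_1,S_2}(\mathbf{p}\times\mathbf{q})=\sum_{\varphi:\mathcal{L}(S_0,S_2)\to\mathbb{N}^\star}\ \prod_{\ell\in\mathcal{L}(S_0,S_2)}p_{\varphi(\ell)}\prod_{m'\in\mathcal{L}(S_0,S_1)}q_{\psi(m')},$$ with the convention $p_i=q_i=0$ for $i>m$, where $\psi(m')=\max_\ell\varphi(\ell)$, $\ell$ running over the loops of $\mathcal{L}(S_0,S_2)$ which have an edge with the same label as some edge of $m'$.
   Context: Pair-partitions of $[2k]$ are sets of disjoint two-element subsets with union $[2k]$, identified with fixed-point-free involutions. $\mathcal{L}(A,B)$ is the bipartite graph with a black vertex per pair of $A$, a white vertex per pair of $B$, and an edge labeled $i$ for each $i\in[2k]$ joining the pairs containing $i$; it is viewed as the set of its connected components (loops). $\mathbf{p}\times\mathbf{q}$ is the partition consisting of $q_i$ repeated $p_i$ times for $i=1,\dots,m$. $N^{(1)}_{S_0,S_1,S_2}(\lambda)$ is the number of functions $f$ from $[2k]$ to the boxes of $\lambda$ such that for all $l$: $f(l)=f(S_0(l))$; $f(l)$ and $f(S_1(l))$ are in the same column; $f(l)$ and $f(S_2(l))$ are in the same row. *)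

theory Defs
  imports Main "HOL-Library.FuncSet"
begin

definition pair_partition :: "nat \<Rightarrow> (nat \<Rightarrow> nat) \<Rightarrow> bool" where
  "pair_partition k S \<longleftrightarrow>
     (\<forall>i\<in>{1..2*k}. S i \<in> {1..2*k} \<and> S i \<noteq> i \<and> S (S i) = i)"

text \<open>Loops of L(A,B): connected components, each identified with its set of edge labels,
  i.e. the classes of {1..2k} under the equivalence generated by i ~ A i and i ~ B i.\<close>
definition loop_rel :: "nat \<Rightarrow> (nat \<Rightarrow> nat) \<Rightarrow> (nat \<Rightarrow> nat) \<Rightarrow> (nat \<times> nat) set" where
  "loop_rel k A B =
     ({(i, A i) | i. i \<in> {1..2*k}} \<union> {(i, B i) | i. i \<in> {1..2*k}})\<^sup>*"

definition loops :: "nat \<Rightarrow> (nat \<Rightarrow> nat) \<Rightarrow> (nat \<Rightarrow> nat) \<Rightarrow> nat set set" where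
  "loops k A B = {1..2*k} // loop_rel k A B"

text \<open>Partition p x q, as the list of its row lengths: q_i repeated p_i times, i = 1..m.\<close>
definition pq_partition :: "nat \<Rightarrow> (nat \<Rightarrow> nat) \<Rightarrow> (nat \<Rightarrow> nat) \<Rightarrow> nat list" where
  "pq_partition m p q = concat (map (\<lambda>i. replicate (p i) (q i)) [1..<Suc m])"

definition boxes :: "nat list \<Rightarrow> (nat \<times> nat) set" where
  "boxes lam = {(r, c). 1 \<le> r \<and> r \<le> length lam \<and> 1 \<le> c \<and> c \<le> lam ! (r - 1)}"

definition N1 :: "nat \<Rightarrow> (nat \<Rightarrow> nat) \<Rightarrow> (nat \<Rightarrow> nat) \<Rightarrow> (nat \<Rightarrow> nat) \<Rightarrow> nat list \<Rightarrow> nat" where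
  "N1 k S0 S1 S2 lam = card {f \<in> {1..2*k} \<rightarrow>\<^sub>E boxes lam.
     \<forall>l\<in>{1..2*k}. f l = f (S0 l) \<and> snd (f l) = snd (f (S1 l)) \<and> fst (f l) = fst (f (S2 l))}"

end

theory Submission
  imports Defs
begin


lemma lr_equiv:
  assumes "pair_partition k S" "pair_partition k T"
  shows "equiv UNIV (loop_rel k S T)"
proof -
  let ?E = "{(i, S i) | i. i \<in> {1..2*k}} \<union> {(i, T i) | i. i \<in> {1..2*k}}"
  have "sym ?E"
  proof (rule symI)
    fix a b assume "(a,b) \<in> ?E"
    then obtain i where i: "i \<in> {1..2*k}" "(a = i \<and> b = S i) \<or> (a = i \<and> b = T i)" by blast
    from i(2) show "(b,a) \<in> ?E"
    proof
      assume h: "a = i \<and> b = S i"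
      have X: "S i \<in> {1..2*k}" "S (S i) = i" using assms(1) i(1) unfolding pair_partition_def by auto
      have "(S i, S (S i)) \<in> ?E" using X(1) by blast
      then show ?thesis using h X(2) by simp
    next
      assume h: "a = i \<and> b = T i"
      have X: "T i \<in> {1..2*k}" "T (T i) = i" using assms(2) i(1) unfolding pair_partition_def by auto
      have "(T i, T (T i)) \<in> ?E" using X(1) by blast
      then show ?thesis using h X(2) by simp
    qed
  qed
  then have "sym (?E\<^sup>*)" by (rule sym_rtrancl)
  then show ?thesis unfolding loop_rel_def equiv_def
    by (auto simp: refl_rtrancl trans_rtrancl)
qed

lemma lr_closed:
  assumes "pair_partition k S" "pair_partition k T"
    and "(x,y) \<in> loop_rel k S T" and "x \<in> {1..2*k}"
  shows "y \<in> {1..2*k}"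
  using assms(3,4) unfolding loop_rel_def
proof (induction rule: rtrancl_induct)
  case base then show ?case by simp
next
  case (step y z) then show ?case using assms(1,2) unfolding pair_partition_def by auto
qed

lemma lr_const:
  assumes "(x,y) \<in> loop_rel k S T"
    and "\<forall>i\<in>{1..2*k}. g i = g (S i) \<and> g i = g (T i)"
  shows "g x = g y"
  using assms(1) unfolding loop_rel_def
proof (induction rule: rtrancl_induct)
  case base then show ?case by simp
next
  case (step y z) then show ?case using assms(2) by auto
qed

lemma loops_img: "loops k S T = (\<lambda>i. loop_rel k S T `` {i}) ` {1..2*k}"
  unfolding loops_def quotient_def by auto

lemma loops_finite: "finite (loops k S T)"
  unfolding loops_img by simp

lemma loops_mem:
  assumes "pair_partition k S" "pair_partition k T"
    and "l \<in> loops k S T" "i \<in> l"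
  shows "l = loop_rel k S T `` {i}" "i \<in> {1..2*k}"
proof -
  obtain x where x: "x \<in> {1..2*k}" "l = loop_rel k S T `` {x}"
    using assms(3) loops_img by blast
  then have xi: "(x,i) \<in> loop_rel k S T" using assms(4) by auto
  show "l = loop_rel k S T `` {i}"
    using equiv_class_eq[OF lr_equiv[OF assms(1,2)] xi] x by simp
  show "i \<in> {1..2*k}" using lr_closed[OF assms(1,2) xi x(1)] .
qed

lemma loops_self: "i \<in> loop_rel k S T `` {i}"
  unfolding loop_rel_def by auto

lemma pq_blocks:
  "\<exists>b. (\<forall>r\<in>{1..length (pq_partition m p q)}. b r \<in> {1..m} \<and> pq_partition m p q ! (r-1) = q (b r))
     \<and> (\<forall>i\<in>{1..m}. card {r\<in>{1..length (pq_partition m p q)}. b r = i} = p i)"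
proof (induction m)
  case 0
  then show ?case by (simp add: pq_partition_def)
next
  case (Suc m)
  obtain b where b: "\<forall>r\<in>{1..length (pq_partition m p q)}. b r \<in> {1..m} \<and> pq_partition m p q ! (r-1) = q (b r)"
     "\<forall>i\<in>{1..m}. card {r\<in>{1..length (pq_partition m p q)}. b r = i} = p i" using Suc by blast
  define n where "n = length (pq_partition m p q)"
  have eq: "pq_partition (Suc m) p q = pq_partition m p q @ replicate (p (Suc m)) (q (Suc m))"
    by (simp add: pq_partition_def)
  define b' where "b' r = (if r \<le> n then b r else Suc m)" for r
  have len: "length (pq_partition (Suc m) p q) = n + p (Suc m)" by (simp add: eq n_def)
  have A: "\<forall>r\<in>{1..length (pq_partition (Suc m) p q)}. b' r \<in> {1..Suc m} \<and> pq_partition (Suc m) p q ! (r-1) = q (b' r)"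
  proof
    fix r assume r: "r \<in> {1..length (pq_partition (Suc m) p q)}"
    show "b' r \<in> {1..Suc m} \<and> pq_partition (Suc m) p q ! (r-1) = q (b' r)"
    proof (cases "r \<le> n")
      case True
      then show ?thesis using b(1) r unfolding eq b'_def n_def by (auto simp: nth_append intro: le_SucI)
    next
      case False
      then show ?thesis using r len unfolding eq b'_def n_def by (auto simp: nth_append)
    qed
  qed
  have B: "\<forall>i\<in>{1..Suc m}. card {r\<in>{1..length (pq_partition (Suc m) p q)}. b' r = i} = p i"
  proof
    fix i assume i: "i \<in> {1..Suc m}"
    show "card {r\<in>{1..length (pq_partition (Suc m) p q)}. b' r = i} = p i"
    proof (cases "i = Suc m")
      case True
      have "{r\<in>{1..length (pq_partition (Suc m) p q)}. b' r = i} = {n+1..n + p (Suc m)}"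
        using b(1) True unfolding len b'_def n_def by force
      then show ?thesis using True by simp
    next
      case False
      have "{r\<in>{1..length (pq_partition (Suc m) p q)}. b' r = i} = {r\<in>{1..n}. b r = i}"
        using False unfolding len b'_def by auto
      then show ?thesis using b(2) i False n_def by auto
    qed
  qed
  show ?case using A B by blast
qed


lemma min_q:
  fixes q :: "nat \<Rightarrow> nat"
  assumes "finite X" "X \<noteq> {}" "X \<subseteq> {1..m}"
    and "\<forall>i j. 1 \<le> i \<longrightarrow> i \<le> j \<longrightarrow> j \<le> m \<longrightarrow> q j \<le> q i"
  shows "Min (q ` X) = q (Max X)"
proof (rule antisym)
  have "Max X \<in> X" using assms(1,2) by simp
  then show "Min (q ` X) \<le> q (Max X)" using assms(1) by simp
  show "q (Max X) \<le> Min (q ` X)"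
  proof (rule Min.boundedI)
    show "finite (q ` X)" using assms(1) by simp
    show "q ` X \<noteq> {}" using assms(2) by simp
    fix a assume "a \<in> q ` X"
    then obtain x where x: "x \<in> X" "a = q x" by auto
    have "x \<le> Max X" using assms(1) x(1) by simp
    moreover have "Max X \<le> m" "1 \<le> x" using \<open>Max X \<in> X\<close> x(1) assms(3) by auto
    ultimately show "q (Max X) \<le> a" using assms(4) x(2) by blast
  qed
qed

theorem lemma3p9:
  fixes k m :: nat and S0 S1 S2 p q :: "nat \<Rightarrow> nat"
  assumes "pair_partition k S0" and "pair_partition k S1" and "pair_partition k S2"
    and "\<forall>i\<in>{1..m}. 0 < p i \<and> 0 < q i"
    and "\<forall>i j. 1 \<le> i \<longrightarrow> i \<le> j \<longrightarrow> j \<le> m \<longrightarrow> q j \<le> q i"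
  shows "N1 k S0 S1 S2 (pq_partition m p q) =
    (\<Sum>\<phi> \<in> loops k S0 S2 \<rightarrow>\<^sub>E {1..m}.
       (\<Prod>l\<in>loops k S0 S2. p (\<phi> l)) *
       (\<Prod>m'\<in>loops k S0 S1. q (Max {\<phi> l | l. l \<in> loops k S0 S2 \<and> l \<inter> m' \<noteq> {}})))"
proof -
  define A where "A = {1..2*k}"
  define R1 where "R1 = loop_rel k S0 S1"
  define R2 where "R2 = loop_rel k S0 S2"
  define L1 where "L1 = loops k S0 S1"
  define L2 where "L2 = loops k S0 S2"
  define lam where "lam = pq_partition m p q"
  define n where "n = length lam"
  obtain b where b1: "\<forall>r\<in>{1..n}. b r \<in> {1..m} \<and> lam ! (r-1) = q (b r)"
    and b2: "\<forall>i\<in>{1..m}. card {r\<in>{1..n}. b r = i} = p i"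
    using pq_blocks[of m p q] unfolding n_def lam_def by blast
  have fL1: "finite L1" and fL2: "finite L2" unfolding L1_def L2_def by (rule loops_finite)+
  have mem1: "l = R1 `` {i}" "i \<in> A" if "l \<in> L1" "i \<in> l" for l i
    using loops_mem[OF assms(1,2)] that unfolding L1_def R1_def A_def by auto
  have mem2: "l = R2 `` {i}" "i \<in> A" if "l \<in> L2" "i \<in> l" for l i
    using loops_mem[OF assms(1,3)] that unfolding L2_def R2_def A_def by auto
  have cls1: "R1 `` {i} \<in> L1" if "i \<in> A" for i
    using that unfolding L1_def R1_def A_def loops_def by (rule quotientI)
  have cls2: "R2 `` {i} \<in> L2" if "i \<in> A" for i
    using that unfolding L2_def R2_def A_def loops_def by (rule quotientI)
  have self1: "i \<in> R1 `` {i}" and self2: "i \<in> R2 `` {i}" for i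
    unfolding R1_def R2_def by (rule loops_self)+
  have L1E: "\<exists>i\<in>A. l = R1 `` {i}" if "l \<in> L1" for l
    using that unfolding L1_def R1_def A_def loops_img by auto
  have L2E: "\<exists>i\<in>A. l = R2 `` {i}" if "l \<in> L2" for l
    using that unfolding L2_def R2_def A_def loops_img by auto
  have fin_set: "finite {g l | l. l \<in> L2 \<and> Q l}" for g :: "nat set \<Rightarrow> nat" and Q
    by (rule finite_image_set) (use fL2 in auto)
  have ne_set: "{g l | l. l \<in> L2 \<and> l \<inter> m' \<noteq> {}} \<noteq> {}" if m'L: "m' \<in> L1" for g :: "nat set \<Rightarrow> nat" and m'
  proof -
    obtain i where i: "i \<in> A" "m' = R1 `` {i}" using L1E[OF m'L] by blast
    have "i \<in> R2 `` {i} \<inter> m'" using self1[of i] self2[of i] i(2) by blast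
    then have "R2 `` {i} \<in> L2" "R2 `` {i} \<inter> m' \<noteq> {}" using cls2[OF i(1)] by blast+
    then show ?thesis by blast
  qed
  define bd where "bd r m' = Min {lam ! (r l - 1) | l. l \<in> L2 \<and> l \<inter> m' \<noteq> {}}" for r :: "nat set \<Rightarrow> nat" and m'
  define P where "P = (SIGMA r:(L2 \<rightarrow>\<^sub>E {1..n}). Pi\<^sub>E L1 (\<lambda>m'. {1..bd r m'}))"
  define \<Theta> where "\<Theta> = (\<lambda>(r::nat set \<Rightarrow> nat, c::nat set \<Rightarrow> nat). \<lambda>i\<in>A. (r (R2 `` {i}), c (R1 `` {i})))"
  define F where "F = {f \<in> A \<rightarrow>\<^sub>E boxes lam.
     \<forall>l\<in>A. f l = f (S0 l) \<and> snd (f l) = snd (f (S1 l)) \<and> fst (f l) = fst (f (S2 l))}"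
  have N1eq: "N1 k S0 S1 S2 lam = card F" unfolding N1_def F_def A_def by simp
  have bd_le: "bd r (R1 `` {i}) \<le> lam ! (r (R2 `` {i}) - 1)" if "i \<in> A" for r i
    unfolding bd_def
    by (rule Min_le[OF fin_set]) (use cls2[OF that] self1 self2 in blast)
  have S0A: "S0 i \<in> A" and S1A: "S1 i \<in> A" and S2A: "S2 i \<in> A" if "i \<in> A" for i
    using that assms(1,2,3) unfolding pair_partition_def A_def by auto
  have e1: "equiv UNIV R1" unfolding R1_def by (rule lr_equiv[OF assms(1,2)])
  have e2: "equiv UNIV R2" unfolding R2_def by (rule lr_equiv[OF assms(1,3)])
  have R1S0: "R1 `` {S0 i} = R1 `` {i}" and R1S1: "R1 `` {S1 i} = R1 `` {i}" if "i \<in> A" for i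
  proof -
    have "(i, S0 i) \<in> R1" "(i, S1 i) \<in> R1" using that unfolding R1_def loop_rel_def A_def by auto
    then show "R1 `` {S0 i} = R1 `` {i}" "R1 `` {S1 i} = R1 `` {i}"
      using equiv_class_eq[OF e1] by metis+
  qed
  have R2S0: "R2 `` {S0 i} = R2 `` {i}" and R2S2: "R2 `` {S2 i} = R2 `` {i}" if "i \<in> A" for i
  proof -
    have "(i, S0 i) \<in> R2" "(i, S2 i) \<in> R2" using that unfolding R2_def loop_rel_def A_def by auto
    then show "R2 `` {S0 i} = R2 `` {i}" "R2 `` {S2 i} = R2 `` {i}"
      using equiv_class_eq[OF e2] by metis+
  qed
  have inj: "inj_on \<Theta> P"
  proof (rule inj_onI)
    fix x y assume x: "x \<in> P" and y: "y \<in> P" and eq: "\<Theta> x = \<Theta> y"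
    obtain r c where rc: "x = (r, c)" by fastforce
    obtain r' c' where rc': "y = (r', c')" by fastforce
    have r: "r \<in> L2 \<rightarrow>\<^sub>E {1..n}" "c \<in> Pi\<^sub>E L1 (\<lambda>m'. {1..bd r m'})" using x rc P_def by auto
    have r': "r' \<in> L2 \<rightarrow>\<^sub>E {1..n}" "c' \<in> Pi\<^sub>E L1 (\<lambda>m'. {1..bd r' m'})" using y rc' P_def by auto
    have pt: "r (R2 `` {i}) = r' (R2 `` {i}) \<and> c (R1 `` {i}) = c' (R1 `` {i})" if "i \<in> A" for i
      using fun_cong[OF eq, of i] that unfolding rc rc' \<Theta>_def by simp
    have "r = r'"
      by (rule PiE_ext[OF r(1) r'(1)]) (use L2E pt in blast)
    moreover have "c = c'"
    proof (rule extensionalityI)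
      show "c \<in> extensional L1" "c' \<in> extensional L1" using r(2) r'(2) by (auto simp: PiE_iff)
      show "c l = c' l" if "l \<in> L1" for l using L1E[OF that] pt by blast
    qed
    ultimately show "x = y" using rc rc' by simp
  qed
  have sub1: "\<Theta> ` P \<subseteq> F"
  proof
    fix f assume "f \<in> \<Theta> ` P"
    then obtain r c where rc: "r \<in> L2 \<rightarrow>\<^sub>E {1..n}" "c \<in> Pi\<^sub>E L1 (\<lambda>m'. {1..bd r m'})"
      and f: "f = \<Theta> (r, c)" unfolding P_def by auto
    have fi: "f i = (r (R2 `` {i}), c (R1 `` {i}))" if "i \<in> A" for i
      using that f unfolding \<Theta>_def by simp
    have "f \<in> A \<rightarrow>\<^sub>E boxes lam"
    proof (unfold PiE_iff, intro conjI ballI)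
      show "f \<in> extensional A" using f unfolding \<Theta>_def by simp
      fix i assume i: "i \<in> A"
      have "r (R2 `` {i}) \<in> {1..n}" using rc(1) cls2[OF i] by auto
      moreover have "c (R1 `` {i}) \<in> {1..bd r (R1 `` {i})}" using rc(2) cls1[OF i] by auto
      ultimately show "f i \<in> boxes lam" using bd_le[OF i, of r] fi[OF i]
        unfolding boxes_def n_def by auto
    qed
    moreover have "\<forall>l\<in>A. f l = f (S0 l) \<and> snd (f l) = snd (f (S1 l)) \<and> fst (f l) = fst (f (S2 l))"
      using fi S0A S1A S2A R1S0 R1S1 R2S0 R2S2 by simp
    ultimately show "f \<in> F" unfolding F_def mem_Collect_eq by (rule conjI)
  qed
  have sub2: "F \<subseteq> \<Theta> ` P"
  proof
    fix f assume fF: "f \<in> F"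
    have fE: "f \<in> A \<rightarrow>\<^sub>E boxes lam" and fc: "\<forall>l\<in>A. f l = f (S0 l) \<and> snd (f l) = snd (f (S1 l)) \<and> fst (f l) = fst (f (S2 l))"
      using fF unfolding F_def by auto
    have hs1: "\<forall>i\<in>A. snd (f i) = snd (f (S0 i)) \<and> snd (f i) = snd (f (S1 i))"
    proof (intro ballI)
      fix i assume "i \<in> A"
      then have "f i = f (S0 i)" "snd (f i) = snd (f (S1 i))" using fc by blast+
      then show "snd (f i) = snd (f (S0 i)) \<and> snd (f i) = snd (f (S1 i))" by simp
    qed
    have hs2: "\<forall>i\<in>A. fst (f i) = fst (f (S0 i)) \<and> fst (f i) = fst (f (S2 i))"
    proof (intro ballI)
      fix i assume "i \<in> A"
      then have "f i = f (S0 i)" "fst (f i) = fst (f (S2 i))" using fc by blast+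
      then show "fst (f i) = fst (f (S0 i)) \<and> fst (f i) = fst (f (S2 i))" by simp
    qed
    have h1: "snd (f x) = snd (f y)" if "(x, y) \<in> R1" for x y
      using lr_const[of x y k S0 S1 "\<lambda>i. snd (f i)"] that hs1 unfolding R1_def A_def by blast
    have h2: "fst (f x) = fst (f y)" if "(x, y) \<in> R2" for x y
      using lr_const[of x y k S0 S2 "\<lambda>i. fst (f i)"] that hs2 unfolding R2_def A_def by blast
    define r where "r = (\<lambda>l\<in>L2. fst (f (SOME j. j \<in> l)))"
    define c where "c = (\<lambda>l\<in>L1. snd (f (SOME j. j \<in> l)))"
    have rA: "r (R2 `` {i}) = fst (f i)" if "i \<in> A" for i
    proof -
      have "(SOME j. j \<in> R2 `` {i}) \<in> R2 `` {i}" using self2 by (rule someI)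
      then show ?thesis using h2 cls2[OF that] unfolding r_def by auto
    qed
    have cA: "c (R1 `` {i}) = snd (f i)" if "i \<in> A" for i
    proof -
      have "(SOME j. j \<in> R1 `` {i}) \<in> R1 `` {i}" using self1 by (rule someI)
      then show ?thesis using h1 cls1[OF that] unfolding c_def by auto
    qed
    have fb: "f i \<in> boxes lam" if "i \<in> A" for i using fE that by auto
    have rP: "r \<in> L2 \<rightarrow>\<^sub>E {1..n}"
    proof (unfold PiE_iff, intro conjI ballI)
      show "r \<in> extensional L2" unfolding r_def by simp
      fix l assume "l \<in> L2"
      then obtain i where i: "i \<in> A" "l = R2 `` {i}" using L2E by blast
      then show "r l \<in> {1..n}" using rA[OF i(1)] fb[OF i(1)] unfolding boxes_def n_def by auto
    qed
    have cP: "c \<in> Pi\<^sub>E L1 (\<lambda>m'. {1..bd r m'})"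
    proof (unfold PiE_iff, intro conjI ballI)
      show "c \<in> extensional L1" unfolding c_def by simp
      fix m' assume m': "m' \<in> L1"
      then obtain i where i: "i \<in> A" "m' = R1 `` {i}" using L1E by blast
      have "1 \<le> c m'" using cA[OF i(1)] fb[OF i(1)] i(2) unfolding boxes_def by auto
      moreover have "c m' \<le> bd r m'"
        unfolding bd_def
      proof (rule Min.boundedI)
        show "finite {lam ! (r l - 1) |l. l \<in> L2 \<and> l \<inter> m' \<noteq> {}}" by (rule fin_set)
        show "{lam ! (r l - 1) |l. l \<in> L2 \<and> l \<inter> m' \<noteq> {}} \<noteq> {}" by (rule ne_set[OF m'])
        fix a assume "a \<in> {lam ! (r l - 1) |l. l \<in> L2 \<and> l \<inter> m' \<noteq> {}}"
        then obtain l j where l: "l \<in> L2" "j \<in> l" "j \<in> m'" "a = lam ! (r l - 1)" by blast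
        have j: "l = R2 `` {j}" "j \<in> A" using mem2[OF l(1,2)] by auto
        have "m' = R1 `` {j}" using mem1(1)[OF m' l(3)] .
        then have "c m' = snd (f j)" using cA[OF j(2)] by simp
        moreover have "r l = fst (f j)" using rA[OF j(2)] j(1) by simp
        ultimately show "c m' \<le> a" using fb[OF j(2)] l(4) unfolding boxes_def by auto
      qed
      ultimately show "c m' \<in> {1..bd r m'}" by simp
    qed
    have "f = \<Theta> (r, c)"
    proof (rule extensionalityI)
      show "f \<in> extensional A" using fE by (simp add: PiE_iff)
      show "\<Theta> (r, c) \<in> extensional A" unfolding \<Theta>_def by simp
      fix i assume "i \<in> A"
      then show "f i = \<Theta> (r, c) i" using rA cA unfolding \<Theta>_def by simp
    qed
    moreover have "(r, c) \<in> P" using rP cP unfolding P_def by simp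
    ultimately show "f \<in> \<Theta> ` P" by blast
  qed
  have "card F = card P" using inj sub1 sub2 card_image[OF inj] by auto
  also have "\<dots> = (\<Sum>r \<in> L2 \<rightarrow>\<^sub>E {1..n}. \<Prod>m'\<in>L1. bd r m')"
    unfolding P_def using fL1 fL2 by (simp add: card_PiE finite_PiE)
  finally have step1: "card F = (\<Sum>r \<in> L2 \<rightarrow>\<^sub>E {1..n}. \<Prod>m'\<in>L1. bd r m')" .
  define G where "G \<phi> = (\<Prod>m'\<in>L1. Min {q (\<phi> l) | l. l \<in> L2 \<and> l \<inter> m' \<noteq> {}})" for \<phi> :: "nat set \<Rightarrow> nat"
  define g where "g r = (\<lambda>l\<in>L2. b (r l))" for r :: "nat set \<Rightarrow> nat"
  define S where "S = L2 \<rightarrow>\<^sub>E {1..n}"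
  define T where "T = L2 \<rightarrow>\<^sub>E {1..m}"
  have bdG: "(\<Prod>m'\<in>L1. bd r m') = G (g r)" if "r \<in> S" for r
    unfolding G_def bd_def
  proof (rule prod.cong[OF refl], rule arg_cong[where f=Min])
    fix m'
    show "{lam ! (r l - 1) |l. l \<in> L2 \<and> l \<inter> m' \<noteq> {}} = {q (g r l) |l. l \<in> L2 \<and> l \<inter> m' \<noteq> {}}"
    proof -
      have eqs: "lam ! (r l - 1) = q (g r l)" if "l \<in> L2" for l
        using b1 \<open>r \<in> S\<close> that unfolding S_def g_def by auto
      show ?thesis by (intro Collect_cong ex_cong1) (use eqs in auto)
    qed
  qed
  have finS: "finite S" and finT: "finite T" unfolding S_def T_def using fL2 by (auto intro: finite_PiE)
  have gST: "g ` S \<subseteq> T" using b1 unfolding S_def T_def g_def by (auto simp: PiE_iff)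
  have fiber: "{r \<in> S. g r = \<phi>} = Pi\<^sub>E L2 (\<lambda>l. {x\<in>{1..n}. b x = \<phi> l})" if "\<phi> \<in> T" for \<phi>
  proof (rule set_eqI)
    fix r
    have ext: "\<phi> \<in> extensional L2" using that unfolding T_def by (simp add: PiE_iff)
    show "r \<in> {r \<in> S. g r = \<phi>} \<longleftrightarrow> r \<in> Pi\<^sub>E L2 (\<lambda>l. {x\<in>{1..n}. b x = \<phi> l})"
    proof
      assume "r \<in> {r \<in> S. g r = \<phi>}"
      then show "r \<in> Pi\<^sub>E L2 (\<lambda>l. {x\<in>{1..n}. b x = \<phi> l})"
        unfolding S_def g_def by (auto simp: PiE_iff dest: fun_cong)
    next
      assume h: "r \<in> Pi\<^sub>E L2 (\<lambda>l. {x\<in>{1..n}. b x = \<phi> l})"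
      have "g r = \<phi>"
      proof (rule extensionalityI[OF _ ext])
        show "g r \<in> extensional L2" unfolding g_def by simp
        show "g r l = \<phi> l" if "l \<in> L2" for l using h that unfolding g_def by (auto simp: PiE_iff)
      qed
      moreover have "r \<in> S" using h unfolding S_def by (auto simp: PiE_iff)
      ultimately show "r \<in> {r \<in> S. g r = \<phi>}" by simp
    qed
  qed
  have cardfib: "card {r \<in> S. g r = \<phi>} = (\<Prod>l\<in>L2. p (\<phi> l))" if "\<phi> \<in> T" for \<phi>
  proof -
    have "card {r \<in> S. g r = \<phi>} = (\<Prod>l\<in>L2. card {x\<in>{1..n}. b x = \<phi> l})"
      unfolding fiber[OF that] by (rule card_PiE[OF fL2])
    also have "\<dots> = (\<Prod>l\<in>L2. p (\<phi> l))"
      by (rule prod.cong[OF refl]) (use b2 that in \<open>auto simp: T_def PiE_iff\<close>)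
    finally show ?thesis .
  qed
  have Gq: "G \<phi> = (\<Prod>m'\<in>L1. q (Max {\<phi> l | l. l \<in> L2 \<and> l \<inter> m' \<noteq> {}}))" if "\<phi> \<in> T" for \<phi>
    unfolding G_def
  proof (rule prod.cong[OF refl])
    fix m' assume m': "m' \<in> L1"
    have "{q (\<phi> l) | l. l \<in> L2 \<and> l \<inter> m' \<noteq> {}} = q ` {\<phi> l | l. l \<in> L2 \<and> l \<inter> m' \<noteq> {}}" by blast
    moreover have "Min (q ` {\<phi> l | l. l \<in> L2 \<and> l \<inter> m' \<noteq> {}}) = q (Max {\<phi> l | l. l \<in> L2 \<and> l \<inter> m' \<noteq> {}})"
      by (rule min_q[OF fin_set ne_set[OF m'] _ assms(5)]) (use that in \<open>auto simp: T_def PiE_iff\<close>)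
    ultimately show "Min {q (\<phi> l) | l. l \<in> L2 \<and> l \<inter> m' \<noteq> {}} = q (Max {\<phi> l | l. l \<in> L2 \<and> l \<inter> m' \<noteq> {}})"
      by simp
  qed
  have "(\<Sum>r \<in> S. \<Prod>m'\<in>L1. bd r m') = (\<Sum>r \<in> S. G (g r))"
    using bdG by (rule sum.cong[OF refl])
  also have "\<dots> = (\<Sum>\<phi>\<in>T. \<Sum>r\<in>{r \<in> S. g r = \<phi>}. G (g r))"
    by (rule sum.group[OF finS finT gST, symmetric])
  also have "\<dots> = (\<Sum>\<phi>\<in>T. card {r \<in> S. g r = \<phi>} * G \<phi>)"
    by (rule sum.cong[OF refl]) simp
  also have "\<dots> = (\<Sum>\<phi>\<in>T. (\<Prod>l\<in>L2. p (\<phi> l)) * (\<Prod>m'\<in>L1. q (Max {\<phi> l | l. l \<in> L2 \<and> l \<inter> m' \<noteq> {}})))"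
    by (rule sum.cong[OF refl]) (simp add: cardfib Gq)
  finally show ?thesis using N1eq step1 unfolding S_def T_def L1_def L2_def lam_def by simp
qed

end
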